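(* Let $U,V$ be finite-dimensional vector spaces over a field $\mathbb{K}$, let $\mathcal{S}$ be a linear subspace of $\mathcal{L}(U,V)$ with $\operatorname{codim}_{\mathcal{L}(U,V)}\mathcal{S}\leq 2\dim V-3$, and let $F:\mathcal{S}\to V$ be a range-compatible group homomorphism. Assume there are three linearly independent vectors $y_1,y_2,y_3\in V$ such that $F\bmod y_i$ is local for each $i\in\{1,2,3\}$. Then $F$ is local.
   Context: A map $F:\mathcal{S}\to V$ is range-compatible when $F(s)\in\operatorname{im}s$ for all $s\in\mathcal{S}$, and local when there is $x\in U$ with $F(s)=s(x)$ for all $s$. For nonzero $y\in V$, let $\pi:V\to V/\mathbb{K}y$ be the canonical projection; $\mathcal{S}\bmod y:=\{\pi\circ s: s\in\mathcal{S}\}\subset\mathcal{L}(U,V/\mathbb{K}y)$, and $F\bmod y:\mathcal{S}\bmod y\to V/\mathbb{K}y$ is the unique map with $(F\bmod y)(\pi\circ s)=\pi(F(s))$ for all $s\in\mathcal{S}$ (well defined and range-compatible since $F$ is). Thus $F\bmod y$ is local iff there is $x\in U$ with $F(s)-s(x)\in\mathbb{K}y$ for all $s\in\mathcal{S}$. *)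

theory Defs
  imports "HOL-Analysis.Analysis"
begin

text \<open>Linear maps U \<rightarrow> V between finite-dimensional K-spaces are represented by
  matrices in 'k^'n^'m (U = K^'n, V = K^'m, after choosing bases); s x is 's *v x'.\<close>

definition mscale :: "'k::field \<Rightarrow> 'k^'n^'m \<Rightarrow> 'k^'n^'m" where
  "mscale c A = (\<chi> i j. c * A $ i $ j)"

lemma vector_space_mscale: "vector_space (mscale :: 'k::field \<Rightarrow> 'k^'n^'m \<Rightarrow> 'k^'n^'m)"
  by unfold_locales (simp_all add: mscale_def vec_eq_iff algebra_simps)

interpretation mat: vector_space "mscale :: 'k::field \<Rightarrow> 'k^'n^'m \<Rightarrow> 'k^'n^'m"
  by (rule vector_space_mscale)

definition range_compatible :: "('k::field^'n^'m) set \<Rightarrow> ('k^'n^'m \<Rightarrow> 'k^'m) \<Rightarrow> bool" where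
  "range_compatible S F \<longleftrightarrow> (\<forall>s\<in>S. F s \<in> range (\<lambda>x. s *v x))"

definition is_local :: "('k::field^'n^'m) set \<Rightarrow> ('k^'n^'m \<Rightarrow> 'k^'m) \<Rightarrow> bool" where
  "is_local S F \<longleftrightarrow> (\<exists>x. \<forall>s\<in>S. F s = s *v x)"

definition local_mod :: "('k::field^'n^'m) set \<Rightarrow> ('k^'n^'m \<Rightarrow> 'k^'m) \<Rightarrow> 'k^'m \<Rightarrow> bool" where
  "local_mod S F y \<longleftrightarrow> (\<exists>x. \<forall>s\<in>S. \<exists>c. F s - s *v x = c *s y)"

end

theory Submission
  imports Defs
begin

lemma eqh: "(u::'a::ab_group_add) - v = w \<Longrightarrow> v = u - w" by (simp add: algebra_simps)

lemma mv_scale: fixes A :: "'k::field^'n^'m" shows "A *v (c *s x) = c *s (A *v x)"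
  by (simp add: matrix_vector_mult_def vec_eq_iff sum_distrib_left algebra_simps)

lemma mscale_mv: fixes A :: "'k::field^'n^'m" shows "mscale c A *v x = c *s (A *v x)"
  by (simp add: mscale_def matrix_vector_mult_def vec_eq_iff sum_distrib_left algebra_simps)

lemma sum_mv: fixes f :: "'i \<Rightarrow> 'k::field^'n^'m" shows "(sum f I) *v x = sum (\<lambda>i. f i *v x) I"
  by (induction I rule: infinite_finite_induct) (auto simp: matrix_vector_mult_add_rdistrib)

lemma construct_mv:
  fixes g :: "'k::field^'n \<Rightarrow> 'k^'m"
  assumes "vec.independent E" "w \<in> E"
  shows "matrix (vec.construct E g) *v w = g w"
  using assms by (simp add: matrix_works vec.linear_construct vec.construct_basis)

lemma construct_span:
  fixes g :: "'k::field^'n \<Rightarrow> 'k^'m"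
  assumes "vec.independent E"
  shows "matrix (vec.construct E g) *v w \<in> vec.span (g ` E)"
  using assms by (simp add: matrix_works vec.linear_construct vec.construct_in_span)

lemma key_dim:
  fixes S :: "('k::field^'n^'m) set" and a b :: "'k^'n" and y1 y2 y3 :: "'k^'m"
  assumes subS: "mat.subspace S"
    and dimS: "CARD('n) * CARD('m) + 3 \<le> mat.dim S + 2 * CARD('m)"
    and indab: "vec.independent {a,b}" and ab: "a \<noteq> b"
    and ST: "\<forall>s\<in>S. \<exists>c1 c2 c3. s *v a = c2 *s y2 - c1 *s y1 \<and> s *v b = c3 *s y3 - c1 *s y1"
  shows "\<exists>s0\<in>S. s0 *v a = y2 - y1 \<and> s0 *v b = y3 - y1 \<and> (\<forall>u. s0 *v u \<in> vec.span {y2-y1, y3-y1, 0})"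
proof -
  define E where "E = vec.extend_basis {a,b}"
  have indE: "vec.independent E" unfolding E_def using vec.independent_extend_basis[OF indab] .
  have spanE: "vec.span E = UNIV" unfolding E_def using vec.span_extend_basis[OF indab] .
  have abE: "a \<in> E" "b \<in> E" unfolding E_def using vec.extend_basis_superset[OF indab] by auto
  have finE: "finite E" using vec.finiteI_independent[OF indE] .
  have cardE: "card E = CARD('n)"
    using vec.basis_card_eq_dim[of E UNIV] indE spanE by (simp add: card_cart_basis)
  define M where "M u k = matrix (vec.construct E (\<lambda>w. if w = u then axis k 1 else (0::'k^'m)))" for u k
  define t1 where "t1 = matrix (vec.construct E (\<lambda>w. if w = a then - y1 else if w = b then - y1 else 0))"
  define t2 where "t2 = matrix (vec.construct E (\<lambda>w. if w = a then y2 else 0))"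
  define t3 where "t3 = matrix (vec.construct E (\<lambda>w. if w = b then y3 else 0))"
  define g0 where "g0 = (\<lambda>w. if w = a then y2 - y1 else if w = b then y3 - y1 else (0::'k^'m))"
  define s0 where "s0 = matrix (vec.construct E g0)"
  define P where "P = (E - {a,b}) \<times> (UNIV :: 'm set)"
  define F0 where "F0 = {t1,t2,t3} \<union> (\<lambda>p. M (fst p) (snd p)) ` P"
  have finP: "finite P" unfolding P_def using finE by simp
  have expand: "s = mscale c1 t1 + mscale c2 t2 + mscale c3 t3
      + (\<Sum>p\<in>P. mscale ((s *v fst p) $ snd p) (M (fst p) (snd p)))"
    if sa: "s *v a = c2 *s y2 - c1 *s y1" and sb: "s *v b = c3 *s y3 - c1 *s y1" for s c1 c2 c3
    unfolding matrix_eq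
  proof
    fix x
    let ?R = "mscale c1 t1 + mscale c2 t2 + mscale c3 t3
      + (\<Sum>p\<in>P. mscale ((s *v fst p) $ snd p) (M (fst p) (snd p)))"
    show "s *v x = ?R *v x"
    proof (rule vec.linear_eq_on[OF matrix_vector_mul_linear_gen matrix_vector_mul_linear_gen])
      show "x \<in> vec.span E" using spanE by simp
    next
      fix w assume wE: "w \<in> E"
      have Rw: "?R *v w = c1 *s (t1 *v w) + c2 *s (t2 *v w) + c3 *s (t3 *v w)
         + (\<Sum>p\<in>P. (s *v fst p) $ snd p *s (if w = fst p then axis (snd p) 1 else 0))"
        by (simp add: matrix_vector_mult_add_rdistrib mscale_mv sum_mv M_def construct_mv[OF indE wE])
      have sumP: "(\<Sum>p\<in>P. (s *v fst p) $ snd p *s (if w = fst p then axis (snd p) 1 else (0::'k^'m)))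
          = (\<Sum>u\<in>E-{a,b}. \<Sum>k\<in>UNIV. (s *v u) $ k *s (if w = u then axis k 1 else 0))"
        unfolding P_def by (subst sum.cartesian_product) (simp add: case_prod_beta)
      show "s *v w = ?R *v w"
      proof (cases "w \<in> {a,b}")
        case True
        have z: "(\<Sum>p\<in>P. (s *v fst p) $ snd p *s (if w = fst p then axis (snd p) 1 else (0::'k^'m))) = 0"
          unfolding sumP using True by (intro sum.neutral ballI) (auto intro!: sum.neutral)
        from True have "w = a \<or> w = b" by auto
        then show ?thesis
        proof
          assume wa: "w = a"
          have "?R *v w = c1 *s (- y1) + c2 *s y2"
            unfolding Rw z using wa ab by (simp add: t1_def t2_def t3_def construct_mv[OF indE abE(1)])
          moreover have "c1 *s (- y1) + c2 *s y2 = c2 *s y2 - c1 *s y1" by (simp add: vec_eq_iff algebra_simps)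
          ultimately show ?thesis using wa sa by simp
        next
          assume wb: "w = b"
          have "?R *v w = c1 *s (- y1) + c3 *s y3"
            unfolding Rw z using wb ab by (simp add: t1_def t2_def t3_def construct_mv[OF indE abE(2)])
          moreover have "c1 *s (- y1) + c3 *s y3 = c3 *s y3 - c1 *s y1" by (simp add: vec_eq_iff algebra_simps)
          ultimately show ?thesis using wb sb by simp
        qed
      next
        case False
        have "(\<Sum>u\<in>E-{a,b}. \<Sum>k\<in>UNIV. (s *v u) $ k *s (if w = u then axis k 1 else (0::'k^'m)))
            = (\<Sum>u\<in>E-{a,b}. if w = u then (\<Sum>k\<in>UNIV. (s *v u) $ k *s axis k 1) else 0)"
          by (intro sum.cong) auto
        also have "\<dots> = (\<Sum>k\<in>UNIV. (s *v w) $ k *s axis k 1)"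
          using False wE finE by (simp add: sum.delta')
        also have "\<dots> = s *v w" by (rule basis_expansion)
        finally show ?thesis using False unfolding Rw sumP
          by (simp add: t1_def t2_def t3_def construct_mv[OF indE wE])
      qed
    qed
  qed
  have TspanF0: "s \<in> mat.span F0"
    if sa: "s *v a = c2 *s y2 - c1 *s y1" and sb: "s *v b = c3 *s y3 - c1 *s y1" for s c1 c2 c3
  proof -
    have t: "t1 \<in> F0" "t2 \<in> F0" "t3 \<in> F0" unfolding F0_def by auto
    have m: "M (fst p) (snd p) \<in> F0" if "p \<in> P" for p unfolding F0_def using that by auto
    show ?thesis
      apply (subst expand[OF sa sb])
      apply (intro mat.span_add mat.span_scale mat.span_sum)
      apply (auto intro!: mat.span_base t m)
      done
  qed
  have s0a: "s0 *v a = y2 - y1" unfolding s0_def construct_mv[OF indE abE(1)] by (simp add: g0_def)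
  have s0b: "s0 *v b = y3 - y1" unfolding s0_def construct_mv[OF indE abE(2)] using ab by (simp add: g0_def)
  have "s0 *v a = 1 *s y2 - 1 *s y1" "s0 *v b = 1 *s y3 - 1 *s y1" by (simp_all add: s0a s0b)
  then have s0T: "s0 \<in> mat.span F0" by (rule TspanF0)
  have s0img: "\<forall>u. s0 *v u \<in> vec.span {y2-y1, y3-y1, 0}"
  proof
    fix u
    have "g0 ` E \<subseteq> {y2-y1, y3-y1, 0}" unfolding g0_def by auto
    then show "s0 *v u \<in> vec.span {y2-y1, y3-y1, 0}"
      using construct_span[OF indE, of g0 u] vec.span_mono unfolding s0_def by blast
  qed
  have "s0 \<in> S"
  proof (rule ccontr)
    assume ns: "s0 \<notin> S"
    then have "s0 \<notin> mat.span S" using ns subS by (metis mat.span_eq_iff)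
    obtain B where B: "B \<subseteq> S" "mat.independent B" "S \<subseteq> mat.span B" "card B = mat.dim S"
      using mat.basis_exists[of S] by blast
    have "mat.span B \<subseteq> mat.span S" using B(1) mat.span_mono by blast
    then have "s0 \<notin> mat.span B" using \<open>s0 \<notin> mat.span S\<close> by blast
    then have indB': "mat.independent (insert s0 B)" using B(2) by (rule mat.independent_insertI)
    have "S \<subseteq> mat.span F0" using ST TspanF0 by blast
    then have sub: "insert s0 B \<subseteq> mat.span F0" using s0T B(1) by blast
    have finF0: "finite F0" unfolding F0_def using finP by simp
    from mat.independent_span_bound[OF finF0 indB' sub]
    have fb: "finite (insert s0 B)" "card (insert s0 B) \<le> card F0" by auto
    have d: "card (insert s0 B) = mat.dim S + 1"
      using fb(1) B(1,4) ns by (subst card_insert_disjoint) auto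
    have "card (insert s0 B) \<le> card F0" by (rule fb(2))
    also have "card F0 \<le> card {t1,t2,t3} + card ((\<lambda>p. M (fst p) (snd p)) ` P)"
      unfolding F0_def by (rule card_Un_le)
    also have "card {t1,t2,t3} \<le> 3" by (simp add: card_insert_if)
    also have "card ((\<lambda>p. M (fst p) (snd p)) ` P) \<le> card P" by (rule card_image_le[OF finP])
    also have "card P = (CARD('n) - 2) * CARD('m)"
    proof -
      have "card (E - {a,b}) = card E - 2" using abE ab finE by (subst card_Diff_subset) auto
      then show ?thesis unfolding P_def by (simp add: card_cartesian_product cardE)
    qed
    finally have le: "mat.dim S + 1 \<le> 3 + (CARD('n) - 2) * CARD('m)" using d by simp
    have "2 \<le> CARD('n)"
    proof -
      have "card {a,b} \<le> card E" using abE finE by (intro card_mono) auto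
      then show ?thesis using ab cardE by simp
    qed
    then have "(CARD('n) - 2) * CARD('m) + 2 * CARD('m) = CARD('n) * CARD('m)"
      by (metis add_mult_distrib le_add_diff_inverse2)
    then show False using le dimS by linarith
  qed
  then show ?thesis using s0a s0b s0img by blast
qed

theorem lemma4p2:
  fixes S :: "('k::field^'n^'m) set"
    and F :: "'k^'n^'m \<Rightarrow> 'k^'m"
    and y1 y2 y3 :: "'k^'m"
  assumes "mat.subspace S"
    and "int (CARD('n) * CARD('m)) - int (mat.dim S) \<le> 2 * int CARD('m) - 3"
    and "\<forall>s\<in>S. \<forall>t\<in>S. F (s + t) = F s + F t"
    and "range_compatible S F"
    and "\<forall>a b c. a *s y1 + b *s y2 + c *s y3 = 0 \<longrightarrow> a = 0 \<and> b = 0 \<and> c = 0"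
    and "local_mod S F y1" and "local_mod S F y2" and "local_mod S F y3"
  shows "is_local S F"
proof -
  note hy = assms(5)
  obtain x1 where h1: "\<forall>s\<in>S. \<exists>c. F s - s *v x1 = c *s y1" using assms(6) unfolding local_mod_def by blast
  obtain x2 where h2: "\<forall>s\<in>S. \<exists>c. F s - s *v x2 = c *s y2" using assms(7) unfolding local_mod_def by blast
  obtain x3 where h3: "\<forall>s\<in>S. \<exists>c. F s - s *v x3 = c *s y3" using assms(8) unfolding local_mod_def by blast
  define a where "a = x1 - x2"
  define b where "b = x1 - x3"
  have pt: "\<exists>c1 c2 c3. F s - s *v x1 = c1 *s y1 \<and> F s - s *v x2 = c2 *s y2 \<and> F s - s *v x3 = c3 *s y3
      \<and> s *v a = c2 *s y2 - c1 *s y1 \<and> s *v b = c3 *s y3 - c1 *s y1" if sS: "s \<in> S" for s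
  proof -
    obtain c1 c2 c3 where e: "F s - s *v x1 = c1 *s y1" "F s - s *v x2 = c2 *s y2" "F s - s *v x3 = c3 *s y3"
      using h1 h2 h3 sS by blast
    have x1: "s *v x1 = F s - c1 *s y1" using e(1) by (rule eqh)
    have x2: "s *v x2 = F s - c2 *s y2" using e(2) by (rule eqh)
    have x3: "s *v x3 = F s - c3 *s y3" using e(3) by (rule eqh)
    have "s *v a = c2 *s y2 - c1 *s y1" unfolding a_def matrix_vector_mult_diff_distrib x1 x2
      by (simp add: algebra_simps)
    moreover have "s *v b = c3 *s y3 - c1 *s y1" unfolding b_def matrix_vector_mult_diff_distrib x1 x3
      by (simp add: algebra_simps)
    ultimately show ?thesis using e by blast
  qed
  show ?thesis
  proof (cases "\<exists>p q. (p \<noteq> 0 \<or> q \<noteq> 0) \<and> p *s a + q *s b = 0")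
    case True
    then obtain p q where pq: "p \<noteq> 0 \<or> q \<noteq> 0" "p *s a + q *s b = 0" by blast
    have rel: "(p + q) * c1 = 0 \<and> p * c2 = 0 \<and> q * c3 = 0"
      if "s *v a = c2 *s y2 - c1 *s y1" "s *v b = c3 *s y3 - c1 *s y1" for s c1 c2 c3
    proof -
      have "0 = s *v (p *s a + q *s b)" using pq(2) by simp
      also have "\<dots> = p *s (s *v a) + q *s (s *v b)" by (simp add: matrix_vector_right_distrib mv_scale)
      also have "\<dots> = (- ((p + q) * c1)) *s y1 + (p * c2) *s y2 + (q * c3) *s y3"
        unfolding that by (simp add: vec_eq_iff algebra_simps)
      finally have "(- ((p + q) * c1)) *s y1 + (p * c2) *s y2 + (q * c3) *s y3 = 0" by simp
      from hy[rule_format, OF this] show ?thesis by simp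
    qed
    show ?thesis
    proof (cases "p + q = 0")
      case False
      show ?thesis unfolding is_local_def
      proof (intro exI ballI)
        fix s assume "s \<in> S"
        then obtain c1 c2 c3 where e: "F s - s *v x1 = c1 *s y1" "s *v a = c2 *s y2 - c1 *s y1"
            "s *v b = c3 *s y3 - c1 *s y1" using pt by blast
        have "c1 = 0" using rel[OF e(2,3)] False by simp
        then show "F s = s *v x1" using e(1) by simp
      qed
    next
      case True
      then have p0: "p \<noteq> 0" using pq(1) by auto
      show ?thesis unfolding is_local_def
      proof (intro exI ballI)
        fix s assume "s \<in> S"
        then obtain c1 c2 c3 where e: "F s - s *v x2 = c2 *s y2" "s *v a = c2 *s y2 - c1 *s y1"
            "s *v b = c3 *s y3 - c1 *s y1" using pt by blast
        have "c2 = 0" using rel[OF e(2,3)] p0 by simp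
        then show "F s = s *v x2" using e(1) by simp
      qed
    qed
  next
    case False
    have ab: "a \<noteq> b"
    proof
      assume "a = b" then have "1 *s a + (-1) *s b = 0" by (simp add: vec_eq_iff)
      moreover have "\<not> (((1::'k) \<noteq> 0 \<or> (-1::'k) \<noteq> 0) \<and> 1 *s a + (-1) *s b = 0)" using False by blast
      ultimately show False by simp
    qed
    have b0: "b \<noteq> 0"
    proof
      assume "b = 0" then have "0 *s a + 1 *s b = 0" by (simp add: vec_eq_iff)
      moreover have "\<not> (((0::'k) \<noteq> 0 \<or> (1::'k) \<noteq> 0) \<and> 0 *s a + 1 *s b = 0)" using False by blast
      ultimately show False by simp
    qed
    have "a \<notin> vec.span {b}"
    proof
      assume "a \<in> vec.span {b}"
      then obtain k where "a = k *s b" unfolding vec.span_singleton by blast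
      then have "1 *s a + (- k) *s b = 0" by (simp add: vec_eq_iff)
      moreover have "\<not> (((1::'k) \<noteq> 0 \<or> (-k) \<noteq> 0) \<and> 1 *s a + (-k) *s b = 0)" using False by blast
      ultimately show False by simp
    qed
    moreover have "vec.independent {b}" using b0 vec.independent_insert[of b "{}"] by simp
    ultimately have indab: "vec.independent {a,b}" by (rule vec.independent_insertI)
    have dimS: "CARD('n) * CARD('m) + 3 \<le> mat.dim S + 2 * CARD('m)" using assms(2) by linarith
    have ST: "\<forall>s\<in>S. \<exists>c1 c2 c3. s *v a = c2 *s y2 - c1 *s y1 \<and> s *v b = c3 *s y3 - c1 *s y1"
      using pt by blast
    obtain s0 where s0: "s0 \<in> S" "s0 *v a = y2 - y1" "s0 *v b = y3 - y1"
        "\<forall>u. s0 *v u \<in> vec.span {y2-y1, y3-y1, 0}"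
      using key_dim[OF assms(1) dimS indab ab ST] by blast
    obtain u where u: "F s0 = s0 *v u" using assms(4) s0(1) unfolding range_compatible_def by blast
    obtain c1 c2 c3 where e: "F s0 - s0 *v x1 = c1 *s y1" "s0 *v a = c2 *s y2 - c1 *s y1"
      using pt[OF s0(1)] by blast
    have "(c1 - 1) *s y1 + (1 - c2) *s y2 + 0 *s y3 = 0"
      using e(2) s0(2) by (simp add: vec_eq_iff algebra_simps)
    from hy[rule_format, OF this] have "c1 = 1" by simp
    then have "y1 = s0 *v (u - x1)" using e(1) u by (simp add: matrix_vector_mult_diff_distrib)
    then have "y1 \<in> vec.span {y2-y1, y3-y1, 0}" using s0(4) by simp
    then obtain k1 where "y1 - k1 *s (y2 - y1) \<in> vec.span {y3 - y1, 0}"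
      using vec.span_breakdown_eq by blast
    then obtain k2 where "y1 - k1 *s (y2 - y1) - k2 *s (y3 - y1) \<in> vec.span {0}"
      using vec.span_breakdown_eq by blast
    then have "y1 - k1 *s (y2 - y1) - k2 *s (y3 - y1) = 0"
      unfolding vec.span_singleton by auto
    then have "(1 + k1 + k2) *s y1 + (- k1) *s y2 + (- k2) *s y3 = 0"
      by (simp add: vec_eq_iff algebra_simps)
    from hy[rule_format, OF this] have False by auto
    then show ?thesis ..
  qed
qed

end
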